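(* Let $\beta>0$ and let $T$ be an even integer with $\beta/T\le1$. Let $\mathcal{I}:=\bigcup_{\alpha\in[0,\beta/T]}\Delta^2_\alpha$. For $b\in\{0,1\}$ let $\mathcal{L}^b:=(I_2,I_2,\mathcal{I},x_1,(\gamma_t)_t,(w_t^b)_t,(c_t)_t)$ be the simplex LDS on $\Delta^2$ with $x_1=(0,1)$, $c_t(x,u):=|x(2)-1/2|$ if $t>T/2$ and $c_t(x,u):=0$ otherwise, $\gamma_t:=\frac12\mathbf{1}[t=T/2]$, $w_t^0:=(1/2,1/2)$ and $w_t^1:=(1,0)$ for all $t$. Define $\pi^0(x):=\frac\beta T(1/2,1/2)$ and $\pi^1(x):=(0,0)$. Then $\pi^0,\pi^1\in\mathcal{K}(\mathcal{I})$, and: (i) the iterates $(x_t,u_t)_{t=1}^T$ produced by following $\pi^0$ in $\mathcal{L}^0$ satisfy $\sum_{t=1}^Tc_t(x_t,u_t)\le\frac T\beta e^{-\beta/2}$; (ii) the iterates produced by following $\pi^1$ in $\mathcal{L}^1$ satisfy $\sum_{t=1}^Tc_t(x_t,u_t)=0$.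
   Context: $\Delta^2$ is the probability simplex in $\mathbb{R}^2$, $\Delta^2_\alpha:=\alpha\Delta^2$, $I_2$ is the $2\times2$ identity, $x(i)$ denotes the $i$-th coordinate. A simplex LDS $(A,B,\mathcal{I},x_1,(\gamma_t),(w_t),(c_t))$ evolves as $x_{t+1}=(1-\gamma_t)[(1-\|u_t\|_1)Ax_t+Bu_t]+\gamma_tw_t$ for controls $u_t\in\mathcal{I}$, with cost $c_t(x_t,u_t)$. $\mathbb{S}^2_\alpha:=\{\alpha M:M\text{ a }2\times2\text{ column-stochastic matrix}\}$, and $\mathcal{K}(\mathcal{I})$ is the set of linear time-invariant policies $x\mapsto Kx$ with $K\in\bigcup_{\alpha\in[0,\beta/T]}\mathbb{S}^2_\alpha$ (on $\Delta^2$, $\pi^0$ is such a policy with $K=\frac\beta T\cdot\frac12\mathbf{1}\mathbf{1}^\top$). *)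

theory Defs
  imports "HOL-Analysis.Analysis"
begin

definition simplex2 :: "(real^2) set" where
  "simplex2 = {x. (\<forall>i. 0 \<le> x$i) \<and> (\<Sum>i\<in>UNIV. x$i) = 1}"

definition scaled_simplex2 :: "real \<Rightarrow> (real^2) set" where
  "scaled_simplex2 \<alpha> = (\<lambda>x. \<alpha> *\<^sub>R x) ` simplex2"

definition norm1 :: "real^2 \<Rightarrow> real" where
  "norm1 u = (\<Sum>i\<in>UNIV. \<bar>u$i\<bar>)"

definition column_stochastic :: "real^2^2 \<Rightarrow> bool" where
  "column_stochastic M \<longleftrightarrow> (\<forall>i j. 0 \<le> M$i$j) \<and> (\<forall>j. (\<Sum>i\<in>UNIV. M$i$j) = 1)"

definition scaled_stochastic :: "real \<Rightarrow> (real^2^2) set" where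
  "scaled_stochastic \<alpha> = {\<alpha> *\<^sub>R M | M. column_stochastic M}"

definition control_set :: "real \<Rightarrow> nat \<Rightarrow> (real^2) set" where
  "control_set \<beta> T = (\<Union>\<alpha>\<in>{0..\<beta> / real T}. scaled_simplex2 \<alpha>)"

definition LTI_policies :: "real \<Rightarrow> nat \<Rightarrow> (real^2 \<Rightarrow> real^2) set" where
  "LTI_policies \<beta> T = {\<pi>. \<exists>\<alpha>\<in>{0..\<beta> / real T}. \<exists>K\<in>scaled_stochastic \<alpha>.
       \<forall>x\<in>simplex2. \<pi> x = K *v x}"

text \<open>State trajectory of the simplex LDS (A,B,I,x1,gamma,w,c) under policy pi:
  lds_state A B x1 \<gamma> w \<pi> t = x_t for t \<ge> 1 (time is 1-indexed; index 0 is unused and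
  set to x1); u_t = \<pi> x_t.\<close>
fun lds_state :: "real^2^2 \<Rightarrow> real^2^2 \<Rightarrow> real^2 \<Rightarrow> (nat \<Rightarrow> real) \<Rightarrow> (nat \<Rightarrow> real^2)
      \<Rightarrow> (real^2 \<Rightarrow> real^2) \<Rightarrow> nat \<Rightarrow> real^2" where
  "lds_state A B x1 \<gamma> w \<pi> 0 = x1"
| "lds_state A B x1 \<gamma> w \<pi> (Suc 0) = x1"
| "lds_state A B x1 \<gamma> w \<pi> (Suc (Suc t)) =
     (let x = lds_state A B x1 \<gamma> w \<pi> (Suc t); u = \<pi> x in
       (1 - \<gamma> (Suc t)) *\<^sub>R ((1 - norm1 u) *\<^sub>R (A *v x) + B *v u) + \<gamma> (Suc t) *\<^sub>R w (Suc t))"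

definition lds_cost :: "real^2^2 \<Rightarrow> real^2^2 \<Rightarrow> real^2 \<Rightarrow> (nat \<Rightarrow> real) \<Rightarrow> (nat \<Rightarrow> real^2)
      \<Rightarrow> (nat \<Rightarrow> real^2 \<Rightarrow> real^2 \<Rightarrow> real) \<Rightarrow> (real^2 \<Rightarrow> real^2) \<Rightarrow> nat \<Rightarrow> real" where
  "lds_cost A B x1 \<gamma> w c \<pi> T =
     (\<Sum>t=1..T. let x = lds_state A B x1 \<gamma> w \<pi> t in c t x (\<pi> x))"

definition vec2 :: "real \<Rightarrow> real \<Rightarrow> real^2" where
  "vec2 a b = (\<chi> i. if i = 1 then a else b)"

definition ex_x1 :: "real^2" where "ex_x1 = vec2 0 1"

definition ex_cost :: "nat \<Rightarrow> nat \<Rightarrow> real^2 \<Rightarrow> real^2 \<Rightarrow> real" where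
  "ex_cost T t x u = (if real t > real T / 2 then \<bar>x$2 - 1/2\<bar> else 0)"

definition ex_gamma :: "nat \<Rightarrow> nat \<Rightarrow> real" where
  "ex_gamma T t = (if real t = real T / 2 then 1/2 else 0)"

definition ex_w0 :: "nat \<Rightarrow> real^2" where "ex_w0 t = vec2 (1/2) (1/2)"
definition ex_w1 :: "nat \<Rightarrow> real^2" where "ex_w1 t = vec2 1 0"

definition ex_pi0 :: "real \<Rightarrow> nat \<Rightarrow> real^2 \<Rightarrow> real^2" where
  "ex_pi0 \<beta> T x = (\<beta> / real T) *\<^sub>R vec2 (1/2) (1/2)"
definition ex_pi1 :: "real^2 \<Rightarrow> real^2" where
  "ex_pi1 x = vec2 0 0"

end

theory Submission
  imports Defs
begin

lemma gam: "ex_gamma (h+h) t = (if t = h then 1/2 else 0)"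
  unfolding ex_gamma_def by auto

lemma st1: assumes h0: "0 < h" shows "lds_state (mat 1) (mat 1) ex_x1 (ex_gamma (h+h)) ex_w1 ex_pi1 (Suc n)
   = (if Suc n \<le> h then vec2 0 1 else vec2 (1/2) (1/2))"
proof (induction n)
  case 0
  then show ?case using h0 by (auto simp: ex_x1_def vec2_def vec_eq_iff forall_2)
next
  case (Suc n)
  show ?case
    apply (subst lds_state.simps(3))
    apply (simp only: Let_def Suc.IH)
    by (simp only: matrix_vector_mul_lid gam)
       (auto simp: ex_pi1_def norm1_def sum_2 vec2_def vec_eq_iff forall_2 ex_w1_def)
qed

lemma st0:
  assumes "0 \<le> a" and h0: "0 < h"
  shows "lds_state (mat 1) (mat 1) ex_x1 (ex_gamma (h+h)) ex_w0 (\<lambda>x. a *\<^sub>R vec2 (1/2) (1/2)) (Suc n)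
   = vec2 (1/2 - (1/2)*(1-a)^n * (if h < Suc n then 1/2 else 1)) (1/2 + (1/2)*(1-a)^n * (if h < Suc n then 1/2 else 1))"
proof (induction n)
  case 0
  then show ?case using h0 by (auto simp: ex_x1_def vec2_def vec_eq_iff forall_2)
next
  case (Suc n)
  have n1: "norm1 (a *\<^sub>R vec2 (1/2) (1/2)) = a" using assms
    by (simp add: norm1_def sum_2 vec2_def)
  show ?case
    apply (subst lds_state.simps(3))
    apply (simp only: Let_def Suc.IH n1)
    apply (simp only: matrix_vector_mul_lid gam)
    apply (auto simp: vec2_def vec_eq_iff forall_2 ex_w0_def algebra_simps)
    done
qed

lemma geo_sum:
  fixes q c :: real
  shows "(\<Sum>t=1..h+m. if h < t then c * q^(t-1) else 0) = c * q^h * (\<Sum>j<m. q^j)"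
proof (induction m)
  case 0
  then show ?case by (auto intro!: sum.neutral)
next
  case (Suc m)
  have "(\<Sum>t=1..h+Suc m. if h < t then c * q^(t-1) else 0)
     = (\<Sum>t=1..h+m. if h < t then c * q^(t-1) else 0) + c * q^(h+m)"
    by (simp add: sum.cl_ivl_Suc)
  then show ?case using Suc by (simp add: algebra_simps power_add)
qed

theorem lemma12:
  fixes \<beta> :: real and T :: nat
  assumes "\<beta> > 0" and "even T" and "T > 0" and "\<beta> / real T \<le> 1"
  shows "ex_pi0 \<beta> T \<in> LTI_policies \<beta> T \<and> ex_pi1 \<in> LTI_policies \<beta> T
    \<and> lds_cost (mat 1) (mat 1) ex_x1 (ex_gamma T) ex_w0 (ex_cost T) (ex_pi0 \<beta> T) T
        \<le> real T / \<beta> * exp (- \<beta> / 2)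
    \<and> lds_cost (mat 1) (mat 1) ex_x1 (ex_gamma T) ex_w1 (ex_cost T) ex_pi1 T = 0"
proof -
  obtain h where T: "T = h+h" using assms(2) by (metis evenE mult_2)
  have h0: "0 < h" using assms(3) T by simp
  define a where "a = \<beta> / real T"
  have a0: "0 < a" and a1: "a \<le> 1" using assms a_def by auto
  have P0: "ex_pi0 \<beta> T \<in> LTI_policies \<beta> T"
    unfolding LTI_policies_def mem_Collect_eq
  proof (intro bexI[of _ a] bexI[of _ "a *\<^sub>R (\<chi> i j. 1/2)"] ballI)
    fix x :: "real^2" assume "x \<in> simplex2"
    then have sx: "x$1 + x$2 = 1" by (simp add: simplex2_def sum_2)
    show "ex_pi0 \<beta> T x = (a *\<^sub>R (\<chi> i j. 1/2)) *v x"
      using sx by (simp add: ex_pi0_def a_def vec2_def vec_eq_iff forall_2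
          matrix_vector_mult_def sum_2 algebra_simps)
        (metis add_divide_distrib distrib_left mult.right_neutral)
  next
    show "a *\<^sub>R ((\<chi> i j. 1/2) :: real^2^2) \<in> scaled_stochastic a"
      by (auto simp: scaled_stochastic_def column_stochastic_def sum_2)
  next
    show "a \<in> {0..\<beta> / real T}" using a0 a_def by simp
  qed
  have P1: "ex_pi1 \<in> LTI_policies \<beta> T"
    unfolding LTI_policies_def mem_Collect_eq
  proof (intro bexI[of _ "0::real"] bexI[of _ "0 *\<^sub>R (mat 1 :: real^2^2)"] ballI)
    fix x :: "real^2" assume "x \<in> simplex2"
    show "ex_pi1 x = (0 *\<^sub>R (mat 1 :: real^2^2)) *v x"
      by (simp add: ex_pi1_def vec2_def vec_eq_iff forall_2 matrix_vector_mult_def sum_2)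
  next
    show "0 *\<^sub>R (mat 1 :: real^2^2) \<in> scaled_stochastic 0"
      unfolding scaled_stochastic_def
      by (rule CollectI, rule exI[of _ "(\<chi> i j. 1/2)::real^2^2"])
        (auto simp: column_stochastic_def sum_2)
  next
    show "0 \<in> {0..\<beta> / real T}" using assms by simp
  qed
  have C1: "lds_cost (mat 1) (mat 1) ex_x1 (ex_gamma T) ex_w1 (ex_cost T) ex_pi1 T = 0"
    unfolding lds_cost_def
  proof (intro sum.neutral ballI)
    fix t assume t: "t \<in> {1..T}"
    then obtain n where n: "t = Suc n" by (cases t) auto
    show "(let x = lds_state (mat 1) (mat 1) ex_x1 (ex_gamma T) ex_w1 ex_pi1 t
          in ex_cost T t x (ex_pi1 x)) = 0"
      unfolding T n st1[OF h0] by (auto simp: ex_cost_def vec2_def)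
  qed
  have pi0: "ex_pi0 \<beta> T = (\<lambda>x. a *\<^sub>R vec2 (1/2) (1/2))"
    by (rule ext) (simp add: ex_pi0_def a_def)
  have "lds_cost (mat 1) (mat 1) ex_x1 (ex_gamma T) ex_w0 (ex_cost T) (ex_pi0 \<beta> T) T
      = (\<Sum>t=1..h+h. if h < t then (1/4) * (1-a)^(t-1) else 0)"
    unfolding lds_cost_def pi0
  proof (unfold T, intro sum.cong refl)
    fix t assume t: "t \<in> {1..h+h}"
    then obtain n where n: "t = Suc n" by (cases t) auto
    have q: "0 \<le> (1-a)^n" using a1 by simp
    show "(let x = lds_state (mat 1) (mat 1) ex_x1 (ex_gamma (h+h)) ex_w0 (\<lambda>x. a *\<^sub>R vec2 (1/2) (1/2)) t
          in ex_cost (h+h) t x (a *\<^sub>R vec2 (1/2) (1/2))) = (if h < t then (1/4) * (1-a)^(t-1) else 0)"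
      unfolding n st0[OF less_imp_le[OF a0] h0] using q by (auto simp: ex_cost_def vec2_def)
  qed
  also have "\<dots> = (1/4) * (1-a)^h * (\<Sum>j<h. (1-a)^j)" by (rule geo_sum)
  also have "(\<Sum>j<h. (1-a)^j) = (1 - (1-a)^h) / a"
    using a0 by (simp add: sum_gp_strict)
  also have "(1/4) * (1-a)^h * ((1 - (1-a)^h) / a) \<le> (1-a)^h / a"
  proof -
    have "0 \<le> (1-a)^h" "(1-a)^h \<le> 1" using a0 a1 by (auto intro: power_le_one)
    then show ?thesis using a0 by (simp add: field_simps mult_le_cancel_left1 mult_le_one)
  qed
  also have "(1-a)^h / a \<le> exp (-a)^h / a"
    using a0 a1 exp_ge_add_one_self[of "-a"]
    by (intro divide_right_mono power_mono) auto
  also have "exp (-a)^h = exp (- \<beta> / 2)"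
    unfolding exp_of_nat_mult[symmetric] using h0 by (simp add: a_def T)
  also have "exp (- \<beta> / 2) / a = real T / \<beta> * exp (- \<beta> / 2)"
    using assms a_def by simp
  finally show ?thesis using P0 P1 C1 by simp
qed

end
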